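(* Let $r,K,\mu$ satisfy Assumption 1. There exists $C>0$ such that for every $a>0$ and every $c\ge c_*$, any solution $(w,m)\in C^0([-a,a])^2$ of the localized problem (P$_a$) with speed $c$ satisfies $$\max(w(x),m(x))\le C\,e^{\frac{-c-\sqrt{c^2-c_*^2}}{2}(x+a)}\qquad\text{for all }x\in[-a,a].$$
   Context: Assumption 1: $r\in(1,\infty)$, $\mu\in\left(0,\min\left(\frac r2,1-\frac1r,1-K,K\right)\right)$, $K\in\left(0,\min\left(1,\frac{r}{r-1}\left(1-\frac{\mu}{1-\mu}\right)\right)\right)$. $c_*:=\sqrt{2\left(1+r-2\mu+\sqrt{(r-1)^2+4\mu^2}\right)}$. $f_w(w,m):=w(1-(w+m))+\mu(m-w)$, $f_m(w,m):=rm\left(1-\frac{w+m}{K}\right)+\mu(w-m)$; $(w^*,m^* )$ is the unique solution in $(0,1)\times(0,K)$ of $f_w=f_m=0$. The localized problem (P$_a$): $w,m\in C^0([-a,a])$ satisfy, in the weak sense on $(-a,a)$, $-cw'-w''=f_w(w,m)\chi_{w\ge0}\chi_{m\ge0}$, $-cm'-m''=f_m(w,m)\chi_{w\ge0}\chi_{m\ge0}$, with $w(-a)=w^*$, $m(-a)=m^*$, $w(a)=m(a)=0$. *)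

theory Defs
  imports "HOL-Analysis.Analysis"
begin

definition assumption1 :: "real \<Rightarrow> real \<Rightarrow> real \<Rightarrow> bool" where
  "assumption1 r K \<mu> \<longleftrightarrow>
     1 < r \<and>
     0 < \<mu> \<and> \<mu> < min (min (r/2) (1 - 1/r)) (min (1 - K) K) \<and>
     0 < K \<and> K < min 1 (r/(r-1) * (1 - \<mu>/(1-\<mu>)))"

definition c_star :: "real \<Rightarrow> real \<Rightarrow> real" where
  "c_star r \<mu> = sqrt (2 * (1 + r - 2*\<mu> + sqrt ((r-1)^2 + 4*\<mu>^2)))"

definition f_w :: "real \<Rightarrow> real \<Rightarrow> real \<Rightarrow> real" where
  "f_w \<mu> w m = w * (1 - (w + m)) + \<mu> * (m - w)"

definition f_m :: "real \<Rightarrow> real \<Rightarrow> real \<Rightarrow> real \<Rightarrow> real \<Rightarrow> real" where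
  "f_m r K \<mu> w m = r * m * (1 - (w + m)/K) + \<mu> * (w - m)"

definition eq_star :: "real \<Rightarrow> real \<Rightarrow> real \<Rightarrow> real \<times> real" where
  "eq_star r K \<mu> = (THE p. 0 < fst p \<and> fst p < 1 \<and> 0 < snd p \<and> snd p < K \<and>
       f_w \<mu> (fst p) (snd p) = 0 \<and> f_m r K \<mu> (fst p) (snd p) = 0)"

definition test_fun :: "real \<Rightarrow> (real \<Rightarrow> real) \<Rightarrow> bool" where
  "test_fun a \<phi> \<longleftrightarrow>
     (\<forall>n x. ((deriv ^^ n) \<phi>) differentiable (at x)) \<and>
     (\<exists>\<alpha> \<beta>. -a < \<alpha> \<and> \<beta> < a \<and> (\<forall>x. x \<notin> {\<alpha>..\<beta>} \<longrightarrow> \<phi> x = 0))"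

text \<open>Weak formulation of  -c u' - u'' = F  on (-a,a):
  integral of u (c phi' - phi'') equals integral of F phi, for all test functions phi.\<close>
definition weak_sol :: "real \<Rightarrow> real \<Rightarrow> (real \<Rightarrow> real) \<Rightarrow> (real \<Rightarrow> real) \<Rightarrow> bool" where
  "weak_sol a c u F \<longleftrightarrow>
     (\<forall>\<phi>. test_fun a \<phi> \<longrightarrow>
        integral {-a..a} (\<lambda>x. u x * (c * deriv \<phi> x - deriv (deriv \<phi>) x))
        = integral {-a..a} (\<lambda>x. F x * \<phi> x))"

definition ind :: "bool \<Rightarrow> real" where
  "ind b = (if b then 1 else 0)"

definition Pa :: "real \<Rightarrow> real \<Rightarrow> real \<Rightarrow> real \<Rightarrow> real \<Rightarrow>
                  (real \<Rightarrow> real) \<Rightarrow> (real \<Rightarrow> real) \<Rightarrow> bool" where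
  "Pa r K \<mu> a c w m \<longleftrightarrow>
     continuous_on {-a..a} w \<and> continuous_on {-a..a} m \<and>
     weak_sol a c w (\<lambda>x. f_w \<mu> (w x) (m x) * ind (w x \<ge> 0) * ind (m x \<ge> 0)) \<and>
     weak_sol a c m (\<lambda>x. f_m r K \<mu> (w x) (m x) * ind (w x \<ge> 0) * ind (m x \<ge> 0)) \<and>
     w (-a) = fst (eq_star r K \<mu>) \<and> m (-a) = snd (eq_star r K \<mu>) \<and>
     w a = 0 \<and> m a = 0"

end

theory Submission
  imports Defs "HOL-Computational_Algebra.Polynomial"
begin

definition smooth :: "(real \<Rightarrow> real) \<Rightarrow> bool" where
  "smooth f \<longleftrightarrow> (\<forall>n x. ((deriv ^^ n) f) differentiable (at x))"

lemma real_fd: "(f::real\<Rightarrow>real) field_differentiable (at x within s) \<longleftrightarrow> f differentiable (at x within s)"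
  by (simp add: field_differentiable_def real_differentiable_def)

lemma smooth_diff: "smooth f \<Longrightarrow> f differentiable (at x)"
  unfolding smooth_def by (metis funpow_0)

lemma funpow_deriv_Suc: "(deriv ^^ Suc n) f = (deriv ^^ n) (deriv f)"
  by (simp add: funpow_Suc_right del: funpow.simps)

lemma smooth_deriv: "smooth f \<Longrightarrow> smooth (deriv f)"
  unfolding smooth_def by (metis funpow_deriv_Suc)

lemma higher_deriv_add:
  fixes A B :: "real \<Rightarrow> real"
  assumes "\<forall>k<n. \<forall>x. ((deriv ^^ k) A) differentiable (at x)"
      and "\<forall>k<n. \<forall>x. ((deriv ^^ k) B) differentiable (at x)"
  shows "(deriv ^^ n) (\<lambda>x. A x + B x) = (\<lambda>x. (deriv ^^ n) A x + (deriv ^^ n) B x)"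
  using assms
proof (induction n arbitrary: A B)
  case 0 then show ?case by simp
next
  case (Suc n)
  have dA: "\<And>x. A differentiable (at x)" and dB: "\<And>x. B differentiable (at x)"
    using Suc.prems by (metis funpow_0 zero_less_Suc)+
  have "deriv (\<lambda>x. A x + B x) = (\<lambda>x. deriv A x + deriv B x)"
    using dA dB by (auto intro!: ext deriv_add simp: real_fd)
  moreover have "(deriv ^^ n) (\<lambda>x. deriv A x + deriv B x) = (\<lambda>x. (deriv ^^ n) (deriv A) x + (deriv ^^ n) (deriv B) x)"
    apply (rule Suc.IH)
    using Suc.prems by (metis Suc_mono funpow_deriv_Suc)+
  ultimately show ?case by (simp add: funpow_deriv_Suc del: funpow.simps)
qed

lemma smooth_mult_aux:
  "\<forall>f g. smooth f \<longrightarrow> smooth g \<longrightarrow> (\<forall>x. ((deriv ^^ n) (\<lambda>x. f x * g x)) differentiable (at x))"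
proof (induction n rule: less_induct)
  case (less n)
  show ?case
  proof (cases n)
    case 0
    show ?thesis
    proof (intro allI impI)
      fix f g x assume f: "smooth f" and g: "smooth g"
      show "((deriv ^^ n) (\<lambda>x. f x * g x)) differentiable (at x)"
        using 0 smooth_diff[OF f] smooth_diff[OF g] by (simp add: differentiable_mult)
    qed
  next
    case (Suc k)
    show ?thesis
    proof (intro allI impI)
      fix f g x assume f: "smooth f" and g: "smooth g"
      have "deriv (\<lambda>x. f x * g x) = (\<lambda>x. deriv f x * g x + f x * deriv g x)"
        using smooth_diff[OF f] smooth_diff[OF g]
        by (auto intro!: ext simp: real_fd)
      moreover have "(deriv ^^ k) (\<lambda>x. deriv f x * g x + f x * deriv g x)
         = (\<lambda>x. (deriv ^^ k) (\<lambda>x. deriv f x * g x) x + (deriv ^^ k) (\<lambda>x. f x * deriv g x) x)"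
        apply (rule higher_deriv_add)
        using less.IH Suc f g smooth_deriv by auto
      ultimately show "((deriv ^^ n) (\<lambda>x. f x * g x)) differentiable (at x)"
        using less.IH Suc f g smooth_deriv
        by (auto simp: funpow_deriv_Suc simp del: funpow.simps intro!: derivative_intros)
    qed
  qed
qed

lemma smooth_mult: "smooth f \<Longrightarrow> smooth g \<Longrightarrow> smooth (\<lambda>x. f x * g x)"
  using smooth_mult_aux unfolding smooth_def by blast

lemma higher_deriv_affine:
  assumes "smooth f"
  shows "(deriv ^^ n) (\<lambda>x. \<gamma> * f (\<alpha> * x + \<beta>)) = (\<lambda>x. \<gamma> * \<alpha> ^ n * (deriv ^^ n) f (\<alpha> * x + \<beta>))"
  using assms
proof (induction n arbitrary: \<gamma> f)
  case 0 then show ?case by simp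
next
  case (Suc n)
  have "deriv (\<lambda>x. \<gamma> * f (\<alpha> * x + \<beta>)) = (\<lambda>x. (\<gamma> * \<alpha>) * deriv f (\<alpha> * x + \<beta>))"
  proof
    fix x
    have "(f has_real_derivative deriv f (\<alpha> * x + \<beta>)) (at (\<alpha> * x + \<beta>))"
      using smooth_diff[OF Suc.prems] DERIV_deriv_iff_real_differentiable by blast
    then have "((\<lambda>x. \<gamma> * f (\<alpha> * x + \<beta>)) has_real_derivative (\<gamma> * \<alpha>) * deriv f (\<alpha> * x + \<beta>)) (at x)"
      by (auto intro!: derivative_eq_intros DERIV_chain2[where f=f])
    then show "deriv (\<lambda>x. \<gamma> * f (\<alpha> * x + \<beta>)) x = (\<gamma> * \<alpha>) * deriv f (\<alpha> * x + \<beta>)"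
      by (rule DERIV_imp_deriv)
  qed
  then show ?case
    using Suc.IH[of "deriv f" "\<gamma> * \<alpha>"] smooth_deriv[OF Suc.prems]
    by (simp add: funpow_deriv_Suc del: funpow.simps) (simp add: funpow_deriv_Suc[symmetric] mult_ac del: funpow.simps)
qed

lemma diff_affine:
  fixes g :: "real \<Rightarrow> real"
  assumes "\<And>y. g differentiable (at y)"
  shows "(\<lambda>x. k * g (\<alpha> * x + \<beta>)) differentiable (at x)"
proof -
  have "(g has_real_derivative deriv g (\<alpha> * x + \<beta>)) (at (\<alpha> * x + \<beta>))"
    using assms DERIV_deriv_iff_real_differentiable by blast
  then have "((\<lambda>x. k * g (\<alpha> * x + \<beta>)) has_real_derivative k * (deriv g (\<alpha> * x + \<beta>) * \<alpha>)) (at x)"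
    by (auto intro!: derivative_eq_intros DERIV_chain2[where f=g])
  then show ?thesis using real_differentiable_def by blast
qed

lemma smooth_affine:
  assumes "smooth f" shows "smooth (\<lambda>x. \<gamma> * f (\<alpha> * x + \<beta>))"
  unfolding smooth_def
proof (intro allI)
  fix n x
  show "((deriv ^^ n) (\<lambda>x. \<gamma> * f (\<alpha> * x + \<beta>))) differentiable (at x)"
    unfolding higher_deriv_affine[OF assms]
    using assms diff_affine[of "(deriv ^^ n) f"] unfolding smooth_def by blast
qed


lemma poly_div_exp_tendsto: "((\<lambda>x. poly R x / exp x) \<longlongrightarrow> (0::real)) at_top"
proof -
  have "((\<lambda>x. \<Sum>i\<le>degree R. coeff R i * (x ^ i / exp x)) \<longlongrightarrow> (0::real)) at_top"
    by (intro tendsto_null_sum tendsto_mult_right_zero tendsto_power_div_exp_0)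
  then show ?thesis
    by (simp add: poly_altdef sum_divide_distrib)
qed

definition hf :: "real \<Rightarrow> real" where
  "hf t = (if t > 0 then exp (-1/t) else 0)"

definition hD :: "real poly \<Rightarrow> real \<Rightarrow> real" where
  "hD Q t = (if t > 0 then poly Q (1/t) * exp (-1/t) else 0)"

definition hstep :: "real poly \<Rightarrow> real poly" where
  "hstep Q = [:0,0,1:] * (Q - pderiv Q)"

lemma hD_deriv: "(hD Q has_real_derivative hD (hstep Q) t) (at t)"
proof (cases "t > 0")
  case True
  have "((\<lambda>t. poly Q (1/t) * exp (-1/t)) has_real_derivative
          (poly (pderiv Q) (1/t) * (-1/t^2)) * exp (-1/t) + poly Q (1/t) * (exp (-1/t) * (1/t^2))) (at t)"
    using True
    by (auto intro!: derivative_eq_intros DERIV_chain2[OF poly_DERIV] simp: power2_eq_square)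
  moreover have "(poly (pderiv Q) (1/t) * (-1/t^2)) * exp (-1/t) + poly Q (1/t) * (exp (-1/t) * (1/t^2))
     = hD (hstep Q) t"
    using True by (simp add: hD_def hstep_def algebra_simps power2_eq_square divide_simps)
  ultimately show ?thesis
    apply -
    apply (rule has_field_derivative_transform_within_open[where S="{0<..}"])
    using True by (auto simp: hD_def)
next
  case False
  show ?thesis
  proof (cases "t < 0")
    case True
    have "((\<lambda>t. 0) has_real_derivative 0) (at t)" by simp
    then show ?thesis
      apply -
      apply (rule has_field_derivative_transform_within_open[where S="{..<0}"])
      using True by (auto simp: hD_def)
  next
    case False
    with \<open>\<not> t > 0\<close> have t0: "t = 0" by simp
    have L: "((\<lambda>y. (hD Q y - hD Q 0) / (y - 0)) \<longlongrightarrow> 0) (at_left 0)"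
    proof -
      have "eventually (\<lambda>y. (hD Q y - hD Q 0) / (y - 0) = 0) (at_left (0::real))"
        unfolding eventually_at_left_field by (auto simp: hD_def intro!: exI[of _ "-1"])
      then show ?thesis by (rule tendsto_eventually)
    qed
    have R: "((\<lambda>y. (hD Q y - hD Q 0) / (y - 0)) \<longlongrightarrow> 0) (at_right 0)"
      unfolding filterlim_at_right_to_top
    proof -
      have "((\<lambda>x. poly ([:0,1:] * Q) x / exp x) \<longlongrightarrow> 0) at_top"
        by (rule poly_div_exp_tendsto)
      moreover have "eventually (\<lambda>x. poly ([:0,1:] * Q) x / exp x = (hD Q (inverse x) - hD Q 0) / (inverse x - 0)) at_top"
        using eventually_gt_at_top[of 0]
        by eventually_elim (simp add: hD_def exp_minus field_simps)
      ultimately show "((\<lambda>x. (hD Q (inverse x) - hD Q 0) / (inverse x - 0)) \<longlongrightarrow> 0) at_top"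
        by (rule Lim_transform_eventually)
    qed
    have "hD (hstep Q) 0 = 0" by (simp add: hD_def)
    then show ?thesis unfolding t0 has_field_derivative_iff
      using filterlim_split_at[OF L R] by simp
  qed
qed

lemma hD_deriv_eq: "deriv (hD Q) = hD (hstep Q)"
  using hD_deriv DERIV_imp_deriv by blast

lemma hf_hD: "hf = hD 1"
  by (auto simp: hf_def hD_def)

lemma hf_higher: "(deriv ^^ n) hf = hD ((hstep ^^ n) 1)"
  by (induction n) (auto simp: hf_hD hD_deriv_eq)

lemma smooth_hf: "smooth hf"
  unfolding smooth_def hf_higher using hD_deriv real_differentiable_def by blast

definition rho :: "real \<Rightarrow> real" where
  "rho x = hf (1 + x) * hf (1 - x)"

lemma smooth_rho: "smooth rho"
proof -
  have 1: "smooth (\<lambda>x. 1 * hf (1 * x + 1))" by (rule smooth_affine[OF smooth_hf])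
  have 2: "smooth (\<lambda>x. 1 * hf ((-1) * x + 1))" by (rule smooth_affine[OF smooth_hf])
  have "rho = (\<lambda>x. (1 * hf (1 * x + 1)) * (1 * hf ((-1) * x + 1)))"
    by (auto simp: rho_def add.commute)
  then show ?thesis using smooth_mult[OF 1 2] by simp
qed

lemma rho_nonneg: "rho x \<ge> 0"
  by (simp add: rho_def hf_def)

lemma rho_zero: "\<bar>x\<bar> \<ge> 1 \<Longrightarrow> rho x = 0"
  by (auto simp: rho_def hf_def)

lemma rho_pos: "\<bar>x\<bar> < 1 \<Longrightarrow> rho x > 0"
  by (auto simp: rho_def hf_def)


lemma smooth_cont: "smooth f \<Longrightarrow> continuous_on S f"
  by (meson continuous_at_imp_continuous_on differentiable_imp_continuous_within smooth_diff)

definition rho1 :: "real \<Rightarrow> real" where "rho1 = deriv rho"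
definition rho2 :: "real \<Rightarrow> real" where "rho2 = deriv rho1"

lemma smooth_rho1: "smooth rho1" unfolding rho1_def by (rule smooth_deriv[OF smooth_rho])
lemma smooth_rho2: "smooth rho2" unfolding rho2_def by (rule smooth_deriv[OF smooth_rho1])

lemma smooth_DERIV: "smooth f \<Longrightarrow> (f has_real_derivative deriv f x) (at x)"
  using DERIV_deriv_iff_real_differentiable smooth_diff by blast

lemma leibniz_aff:
  fixes Z G G' :: "real \<Rightarrow> real"
  assumes Zc: "continuous_on {-a..a} Z"
      and Gd: "\<And>t. (G has_real_derivative G' t) (at t)"
      and Gc: "continuous_on UNIV G'"
      and e: "\<epsilon> > 0"
  shows "((\<lambda>y. integral {-a..a} (\<lambda>x. Z x * (G ((x - y) / \<epsilon>) * k))) has_real_derivative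
          integral {-a..a} (\<lambda>x. Z x * (G' ((x - y) / \<epsilon>) * (- k / \<epsilon>)))) (at y)"
proof -
  have GC: "continuous_on UNIV G"
    using Gd by (meson DERIV_continuous continuous_at_imp_continuous_on)
  have "((\<lambda>y. integral (cbox (-a) a) (\<lambda>x. Z x * (G ((x - y) / \<epsilon>) * k))) has_field_derivative
          integral (cbox (-a) a) (\<lambda>x. Z x * (G' ((x - y) / \<epsilon>) * (- k / \<epsilon>)))) (at y within UNIV)"
  proof (rule leibniz_rule_field_derivative[where f="\<lambda>y x. Z x * (G ((x - y) / \<epsilon>) * k)"])
    fix y x :: real
    show "((\<lambda>y. Z x * (G ((x - y) / \<epsilon>) * k)) has_field_derivative Z x * (G' ((x - y) / \<epsilon>) * (- k / \<epsilon>))) (at y within UNIV)"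
      using e by (auto intro!: derivative_eq_intros DERIV_chain2[OF Gd] simp: field_simps)
  next
    fix y :: real
    have "continuous_on {-a..a} (\<lambda>x. Z x * (G ((x - y) / \<epsilon>) * k))"
      by (intro continuous_intros Zc continuous_on_compose2[OF GC]) (use e in auto)
    then show "(\<lambda>x. Z x * (G ((x - y) / \<epsilon>) * k)) integrable_on cbox (- a) a"
      by (simp add: integrable_continuous_interval)
  next
    have "continuous_on (UNIV \<times> {-a..a}) (\<lambda>p. Z (snd p))"
      by (rule continuous_on_compose2[OF Zc continuous_on_snd]) auto
    moreover have "continuous_on (UNIV \<times> {-a..a}) (\<lambda>p. G' ((snd p - fst p) / \<epsilon>))"
      by (rule continuous_on_compose2[OF Gc]) (use e in \<open>auto intro!: continuous_intros\<close>)
    ultimately have "continuous_on (UNIV \<times> {-a..a}) (\<lambda>p. Z (snd p) * (G' ((snd p - fst p) / \<epsilon>) * (- k / \<epsilon>)))"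
      by (intro continuous_intros)
    then show "continuous_on (UNIV \<times> cbox (- a) a) (\<lambda>(y, x). Z x * (G' ((x - y) / \<epsilon>) * (- k / \<epsilon>)))"
      by (simp add: case_prod_beta')
  qed auto
  then show ?thesis by simp
qed


definition phi :: "real \<Rightarrow> real \<Rightarrow> real \<Rightarrow> real" where
  "phi y \<epsilon> = (\<lambda>x. rho ((x - y) / \<epsilon>))"

lemma phi_aff: "phi y \<epsilon> = (\<lambda>x. 1 * rho ((1/\<epsilon>) * x + (- y / \<epsilon>)))"
  by (auto simp: phi_def diff_divide_distrib)

lemma smooth_phi: "smooth (phi y \<epsilon>)"
  unfolding phi_aff by (rule smooth_affine[OF smooth_rho])

lemma deriv_phi: "deriv (phi y \<epsilon>) = (\<lambda>x. (1/\<epsilon>) * rho1 ((x - y) / \<epsilon>))"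
  using higher_deriv_affine[OF smooth_rho, of 1 1 "1/\<epsilon>" "- y / \<epsilon>"]
  by (simp add: phi_aff rho1_def diff_divide_distrib)

lemma deriv2_phi: "deriv (deriv (phi y \<epsilon>)) = (\<lambda>x. (1/\<epsilon>)^2 * rho2 ((x - y) / \<epsilon>))"
  using higher_deriv_affine[OF smooth_rho, of 2 1 "1/\<epsilon>" "- y / \<epsilon>"]
  by (simp add: phi_aff rho1_def rho2_def diff_divide_distrib numeral_2_eq_2)

lemma phi_nonneg: "phi y \<epsilon> x \<ge> 0"
  by (simp add: phi_def rho_nonneg)

lemma test_phi:
  assumes e: "\<epsilon> > 0" and "-a < y - \<epsilon>" "y + \<epsilon> < a"
  shows "test_fun a (phi y \<epsilon>)"
  unfolding test_fun_def
proof (intro conjI)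
  show "\<forall>n x. (deriv ^^ n) (phi y \<epsilon>) differentiable at x"
    using smooth_phi unfolding smooth_def by blast
  show "\<exists>\<alpha> \<beta>. - a < \<alpha> \<and> \<beta> < a \<and> (\<forall>x. x \<notin> {\<alpha>..\<beta>} \<longrightarrow> phi y \<epsilon> x = 0)"
  proof (intro exI conjI allI impI)
    fix x assume "x \<notin> {y - \<epsilon>..y + \<epsilon>}"
    then have "\<bar>(x - y) / \<epsilon>\<bar> \<ge> 1" using e by (auto simp: field_simps abs_if)
    then show "phi y \<epsilon> x = 0" by (simp add: phi_def rho_zero)
  qed (use assms in auto)
qed

lemma classical_min:
  fixes z z1 gd :: "real \<Rightarrow> real"
  assumes "p < y" "y < q"
      and zd: "\<And>t. t \<in> {p..q} \<Longrightarrow> (z has_real_derivative z1 t) (at t)"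
      and gdd: "\<And>t. t \<in> {p..q} \<Longrightarrow> ((\<lambda>t. exp (c * t) * z1 t) has_real_derivative gd t) (at t)"
      and gneg: "\<And>t. t \<in> {p..q} \<Longrightarrow> gd t \<le> 0"
  shows "z y \<ge> min (z p) (z q)"
proof (rule ccontr)
  assume "\<not> ?thesis"
  then have A: "z y < z p" "z y < z q" by auto
  obtain \<xi>1 where x1: "p < \<xi>1" "\<xi>1 < y" "z y - z p = (y - p) * z1 \<xi>1"
    using MVT2[of p y z z1] zd assms(1,2) by force
  obtain \<xi>2 where x2: "y < \<xi>2" "\<xi>2 < q" "z q - z y = (q - y) * z1 \<xi>2"
    using MVT2[of y q z z1] zd assms(1,2) by force
  have "(y - p) * z1 \<xi>1 < 0" using x1 A(1) by linarith
  then have n1: "z1 \<xi>1 < 0"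
    using x1 by (auto simp: mult_less_0_iff)
  have "(q - y) * z1 \<xi>2 > 0" using x2 A(2) by linarith
  then have p2: "z1 \<xi>2 > 0"
    using x2 by (auto simp: zero_less_mult_iff)
  have "exp (c * \<xi>1) * z1 \<xi>1 \<ge> exp (c * \<xi>2) * z1 \<xi>2"
  proof (rule DERIV_nonpos_imp_nonincreasing[where f="\<lambda>t. exp (c * t) * z1 t"])
    show "\<xi>1 \<le> \<xi>2" using x1 x2 by simp
  next
    fix t assume "\<xi>1 \<le> t" "t \<le> \<xi>2"
    then have "t \<in> {p..q}" using x1 x2 by auto
    then show "\<exists>y. ((\<lambda>t. exp (c * t) * z1 t) has_real_derivative y) (at t) \<and> y \<le> 0"
      using gdd gneg by blast
  qed
  moreover have "exp (c * \<xi>1) * z1 \<xi>1 < 0" using n1 by (simp add: mult_pos_neg)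
  moreover have "exp (c * \<xi>2) * z1 \<xi>2 > 0" using p2 by simp
  ultimately show False by linarith
qed


lemma integ_aff:
  fixes Z G :: "real \<Rightarrow> real"
  assumes Zc: "continuous_on {l..u} Z" and Gc: "continuous_on UNIV G" and e: "\<epsilon> > 0"
  shows "(\<lambda>x. Z x * (G ((x - t) / \<epsilon>) * k)) integrable_on {l..u}"
proof -
  have "continuous_on {l..u} (\<lambda>x. G ((x - t) / \<epsilon>))"
    by (rule continuous_on_compose2[OF Gc]) (use e in \<open>auto intro!: continuous_intros\<close>)
  then have "continuous_on {l..u} (\<lambda>x. Z x * (G ((x - t) / \<epsilon>) * k))"
    by (intro continuous_intros Zc)
  then show ?thesis by (simp add: integrable_continuous_interval)
qed

lemma rho_cont: "continuous_on S rho" by (rule smooth_cont[OF smooth_rho])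
lemma rho1_cont: "continuous_on S rho1" by (rule smooth_cont[OF smooth_rho1])
lemma rho2_cont: "continuous_on S rho2" by (rule smooth_cont[OF smooth_rho2])

lemma moll_bounds:
  fixes Z :: "real \<Rightarrow> real"
  assumes Zc: "continuous_on {-a..a} Z" and e: "\<epsilon> > 0"
      and cont: "\<forall>x\<in>{-a..a}. \<bar>x - t\<bar> < \<epsilon> \<longrightarrow> \<bar>Z x - Z t\<bar> \<le> \<delta>"
  shows "integral {-a..a} (\<lambda>x. Z x * (rho ((x - t) / \<epsilon>) * 1)) \<le> (Z t + \<delta>) * integral {-a..a} (\<lambda>x. 1 * (rho ((x - t) / \<epsilon>) * 1))"
    and "integral {-a..a} (\<lambda>x. Z x * (rho ((x - t) / \<epsilon>) * 1)) \<ge> (Z t - \<delta>) * integral {-a..a} (\<lambda>x. 1 * (rho ((x - t) / \<epsilon>) * 1))"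
proof -
  have I1: "(\<lambda>x. Z x * (rho ((x - t) / \<epsilon>) * 1)) integrable_on {-a..a}"
    by (rule integ_aff[OF Zc rho_cont e])
  have I2: "(\<lambda>x. (Z t + \<delta>) * (rho ((x - t) / \<epsilon>) * 1)) integrable_on {-a..a}"
    by (rule integ_aff[OF continuous_on_const rho_cont e])
  have I3: "(\<lambda>x. (Z t - \<delta>) * (rho ((x - t) / \<epsilon>) * 1)) integrable_on {-a..a}"
    by (rule integ_aff[OF continuous_on_const rho_cont e])
  have pw: "Z t - \<delta> \<le> Z x \<and> Z x \<le> Z t + \<delta>" if "x \<in> {-a..a}" "rho ((x - t) / \<epsilon>) \<noteq> 0" for x
  proof -
    have "\<not> \<bar>(x - t) / \<epsilon>\<bar> \<ge> 1" using that(2) rho_zero by blast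
    moreover have "\<bar>(x - t) / \<epsilon>\<bar> = \<bar>x - t\<bar> / \<epsilon>" using e by (simp add: abs_divide)
    ultimately have "\<bar>x - t\<bar> / \<epsilon> < 1" by linarith
    then have "\<bar>x - t\<bar> < \<epsilon>" using e by (simp add: divide_less_eq)
    then have "\<bar>Z x - Z t\<bar> \<le> \<delta>" using cont that(1) by blast
    then show ?thesis by linarith
  qed
  have "integral {-a..a} (\<lambda>x. Z x * (rho ((x - t) / \<epsilon>) * 1)) \<le> integral {-a..a} (\<lambda>x. (Z t + \<delta>) * (rho ((x - t) / \<epsilon>) * 1))"
  proof (rule integral_le[OF I1 I2])
    fix x assume x: "x \<in> {-a..a}"
    show "Z x * (rho ((x - t) / \<epsilon>) * 1) \<le> (Z t + \<delta>) * (rho ((x - t) / \<epsilon>) * 1)"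
    proof (cases "rho ((x - t) / \<epsilon>) = 0")
      case False
      then show ?thesis using pw[OF x False] rho_nonneg[of "(x - t) / \<epsilon>"]
        by (simp add: mult_right_mono)
    qed simp
  qed
  then show "integral {-a..a} (\<lambda>x. Z x * (rho ((x - t) / \<epsilon>) * 1)) \<le> (Z t + \<delta>) * integral {-a..a} (\<lambda>x. 1 * (rho ((x - t) / \<epsilon>) * 1))"
    by simp
  have "integral {-a..a} (\<lambda>x. Z x * (rho ((x - t) / \<epsilon>) * 1)) \<ge> integral {-a..a} (\<lambda>x. (Z t - \<delta>) * (rho ((x - t) / \<epsilon>) * 1))"
  proof (rule integral_le[OF I3 I1])
    fix x assume x: "x \<in> {-a..a}"
    show "(Z t - \<delta>) * (rho ((x - t) / \<epsilon>) * 1) \<le> Z x * (rho ((x - t) / \<epsilon>) * 1)"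
    proof (cases "rho ((x - t) / \<epsilon>) = 0")
      case False
      then show ?thesis using pw[OF x False] rho_nonneg[of "(x - t) / \<epsilon>"]
        by (simp add: mult_right_mono)
    qed simp
  qed
  then show "integral {-a..a} (\<lambda>x. Z x * (rho ((x - t) / \<epsilon>) * 1)) \<ge> (Z t - \<delta>) * integral {-a..a} (\<lambda>x. 1 * (rho ((x - t) / \<epsilon>) * 1))"
    by simp
qed

lemma rho_lb: "\<bar>x\<bar> \<le> 1/2 \<Longrightarrow> rho x \<ge> exp (-4)"
proof -
  assume x: "\<bar>x\<bar> \<le> 1/2"
  have x2: "1 + x \<ge> 1/2" "1 - x \<ge> 1/2" using x by (simp_all add: abs_le_iff)
  have "1 / (1 + x) \<le> 2" using x2(1) by (simp add: divide_le_eq)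
  then have "exp (-2) \<le> exp (-1 / (1 + x))" by simp
  moreover have "1 / (1 - x) \<le> 2" using x2(2) by (simp add: divide_le_eq)
  then have "exp (-2) \<le> exp (-1 / (1 - x))" by simp
  ultimately have "exp (-2) * exp (-2) \<le> exp (-1 / (1 + x)) * exp (-1 / (1 - x))"
    by (intro mult_mono) auto
  moreover have "exp (-2) * exp (-2) = exp (-4::real)" by (simp add: exp_add[symmetric])
  ultimately show ?thesis using x2 by (simp add: rho_def hf_def)
qed

lemma N_pos:
  assumes e: "\<epsilon> > 0" and t: "-a + \<epsilon> < t" "t < a - \<epsilon>"
  shows "integral {-a..a} (\<lambda>x. 1 * (rho ((x - t) / \<epsilon>) * 1)) > 0"
proof -
  have "integral {t - \<epsilon>/2..t + \<epsilon>/2} (\<lambda>x. exp (-4)) \<le> integral {t - \<epsilon>/2..t + \<epsilon>/2} (\<lambda>x. 1 * (rho ((x - t) / \<epsilon>) * 1))"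
  proof (rule integral_le)
    show "(\<lambda>x. 1 * (rho ((x - t) / \<epsilon>) * 1)) integrable_on {t - \<epsilon>/2..t + \<epsilon>/2}"
      by (rule integ_aff[OF continuous_on_const rho_cont e])
    fix x assume "x \<in> {t - \<epsilon>/2..t + \<epsilon>/2}"
    then have "\<bar>x - t\<bar> \<le> \<epsilon>/2" by (simp only: abs_le_iff atLeastAtMost_iff) linarith
    then have "\<bar>x - t\<bar> / \<epsilon> \<le> 1/2" using e by (simp add: divide_le_eq)
    then have "\<bar>(x - t) / \<epsilon>\<bar> \<le> 1/2" using e by (simp add: abs_divide)
    then show "exp (-4) \<le> 1 * (rho ((x - t) / \<epsilon>) * 1)" using rho_lb by simp
  qed (rule integrable_const_ivl)
  moreover have "integral {t - \<epsilon>/2..t + \<epsilon>/2} (\<lambda>x. exp (-4)) = \<epsilon> * exp (-4)"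
    using e by simp
  moreover have "integral {t - \<epsilon>/2..t + \<epsilon>/2} (\<lambda>x. 1 * (rho ((x - t) / \<epsilon>) * 1)) \<le> integral {-a..a} (\<lambda>x. 1 * (rho ((x - t) / \<epsilon>) * 1))"
    apply (rule integral_subset_le)
    using t e apply auto[1]
    apply (rule integ_aff[OF continuous_on_const rho_cont e])
    apply (rule integ_aff[OF continuous_on_const rho_cont e])
    using rho_nonneg by simp
  moreover have "\<epsilon> * exp (-4) > 0" using e by simp
  ultimately show ?thesis by linarith
qed

lemma N_deriv0:
  assumes e: "\<epsilon> > 0" and t: "-a + \<epsilon> < t" "t < a - \<epsilon>"
  shows "((\<lambda>y. integral {-a..a} (\<lambda>x. 1 * (rho ((x - y) / \<epsilon>) * 1))) has_real_derivative 0) (at t)"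
proof -
  have D: "((\<lambda>y. integral {-a..a} (\<lambda>x. 1 * (rho ((x - y) / \<epsilon>) * 1))) has_real_derivative
     integral {-a..a} (\<lambda>x. 1 * (rho1 ((x - t) / \<epsilon>) * (- 1 / \<epsilon>)))) (at t)"
    by (rule leibniz_aff[OF continuous_on_const _ rho1_cont e])
       (use smooth_DERIV[OF smooth_rho] in \<open>simp add: rho1_def\<close>)
  have a: "-a \<le> a" using t e by simp
  have "((\<lambda>x. rho1 ((x - t) / \<epsilon>) * (1 / \<epsilon>)) has_integral (rho ((a - t) / \<epsilon>) - rho ((-a - t) / \<epsilon>))) {-a..a}"
  proof (rule fundamental_theorem_of_calculus[OF a])
    fix x assume "x \<in> {-a..a}"
    have d: "(rho has_real_derivative rho1 ((x - t) / \<epsilon>)) (at ((x - t) / \<epsilon>))"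
      unfolding rho1_def by (rule smooth_DERIV[OF smooth_rho])
    have "((\<lambda>x. (x - t) / \<epsilon>) has_real_derivative 1 / \<epsilon>) (at x)"
      using e by (auto intro!: derivative_eq_intros)
    from DERIV_chain2[OF d this]
    have "((\<lambda>x. rho ((x - t) / \<epsilon>)) has_real_derivative rho1 ((x - t) / \<epsilon>) * (1 / \<epsilon>)) (at x)" .
    then show "((\<lambda>x. rho ((x - t) / \<epsilon>)) has_vector_derivative rho1 ((x - t) / \<epsilon>) * (1 / \<epsilon>)) (at x within {-a..a})"
      using has_real_derivative_iff_has_vector_derivative has_field_derivative_at_within by blast
  qed
  moreover have "(a - t) / \<epsilon> \<ge> 1" using t e by (simp add: le_divide_eq)
  then have "rho ((a - t) / \<epsilon>) = 0" by (intro rho_zero) linarith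
  moreover have "(-a - t) / \<epsilon> \<le> -1" using t e by (simp add: divide_le_eq)
  then have "rho ((-a - t) / \<epsilon>) = 0" by (intro rho_zero) linarith
  ultimately have "((\<lambda>x. rho1 ((x - t) / \<epsilon>) * (1 / \<epsilon>)) has_integral 0) {-a..a}"
    by simp
  then have "integral {-a..a} (\<lambda>x. rho1 ((x - t) / \<epsilon>) * (1 / \<epsilon>)) = 0"
    by (rule integral_unique)
  then have "integral {-a..a} (\<lambda>x. 1 * (rho1 ((x - t) / \<epsilon>) * (- 1 / \<epsilon>))) = 0"
    using integral_neg[of "{-a..a}" "\<lambda>x. rho1 ((x - t) / \<epsilon>) * (1 / \<epsilon>)"] by simp
  with D e show ?thesis by auto
qed


lemma weak_min:
  fixes Z :: "real \<Rightarrow> real"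
  assumes a: "0 < a" and Zc: "continuous_on {-a..a} Z"
      and SS: "\<And>\<phi>. test_fun a \<phi> \<Longrightarrow> (\<forall>x. 0 \<le> \<phi> x) \<Longrightarrow>
                 0 \<le> integral {-a..a} (\<lambda>x. Z x * (c * deriv \<phi> x - deriv (deriv \<phi>) x))"
      and Zl: "Z (-a) > 0" and Zr: "Z a > 0" and x0: "x0 \<in> {-a..a}"
  shows "Z x0 > 0"
proof (rule ccontr)
  assume "\<not> Z x0 > 0"
  then have Zx0: "Z x0 \<le> 0" by simp
  have "x0 \<noteq> -a" "x0 \<noteq> a" using Zx0 Zl Zr by auto
  then have x0i: "-a < x0" "x0 < a" using x0 by auto
  define d where "d = min (Z (-a)) (Z a) / 2"
  have d: "d > 0" "d \<le> Z (-a) / 2" "d \<le> Z a / 2" using Zl Zr by (auto simp: d_def)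
  have CI: "\<forall>x\<in>{-a..a}. \<forall>e>0. \<exists>\<eta>>0. \<forall>x'\<in>{-a..a}. dist x' x < \<eta> \<longrightarrow> dist (Z x') (Z x) < e"
    using Zc unfolding continuous_on_iff .
  have ma: "-a \<in> {-a..a}" "a \<in> {-a..a}" using a by auto
  obtain \<eta>1 where \<eta>1: "\<eta>1 > 0" "\<forall>x'\<in>{-a..a}. dist x' (-a) < \<eta>1 \<longrightarrow> dist (Z x') (Z (-a)) < Z (-a) / 2"
    using CI ma(1) Zl by (meson half_gt_zero)
  obtain \<eta>2 where \<eta>2: "\<eta>2 > 0" "\<forall>x'\<in>{-a..a}. dist x' a < \<eta>2 \<longrightarrow> dist (Z x') (Z a) < Z a / 2"
    using CI ma(2) Zr by (meson half_gt_zero)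
  define p where "p = -a + min \<eta>1 (x0 + a) / 2"
  define q where "q = a - min \<eta>2 (a - x0) / 2"
  have pq1: "-a < p" using \<eta>1(1) \<eta>2(1) x0i unfolding p_def q_def by (auto simp: min_def field_simps)
  have pq2: "p < x0" using \<eta>1(1) \<eta>2(1) x0i unfolding p_def q_def by (auto simp: min_def field_simps)
  have pq3: "x0 < q" using \<eta>1(1) \<eta>2(1) x0i unfolding p_def q_def by (auto simp: min_def field_simps)
  have pq4: "q < a" using \<eta>1(1) \<eta>2(1) x0i unfolding p_def q_def by (auto simp: min_def field_simps)
  note pq = pq1 pq2 pq3 pq4
  have "dist p (-a) < \<eta>1" using \<eta>1(1) x0i by (auto simp: p_def dist_real_def)
  then have "dist (Z p) (Z (-a)) < Z (-a) / 2" using \<eta>1(2) pq by auto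
  then have Zp: "Z p \<ge> d" using d unfolding dist_real_def abs_less_iff by linarith
  have "dist q a < \<eta>2" using \<eta>2(1) x0i by (auto simp: q_def dist_real_def)
  then have "dist (Z q) (Z a) < Z a / 2" using \<eta>2(2) pq by auto
  then have Zq: "Z q \<ge> d" using d unfolding dist_real_def abs_less_iff by linarith
  define \<delta> where "\<delta> = d / 4"
  have \<delta>: "\<delta> > 0" using d by (simp add: \<delta>_def)
  have pin: "p \<in> {-a..a}" "q \<in> {-a..a}" using pq by auto
  obtain \<eta>x where \<eta>x: "\<eta>x > 0" "\<forall>x'\<in>{-a..a}. dist x' x0 < \<eta>x \<longrightarrow> dist (Z x') (Z x0) < \<delta>"
    using CI[rule_format, OF x0 \<delta>] by blast
  obtain \<eta>p where \<eta>p: "\<eta>p > 0" "\<forall>x'\<in>{-a..a}. dist x' p < \<eta>p \<longrightarrow> dist (Z x') (Z p) < \<delta>"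
    using CI[rule_format, OF pin(1) \<delta>] by blast
  obtain \<eta>q where \<eta>q: "\<eta>q > 0" "\<forall>x'\<in>{-a..a}. dist x' q < \<eta>q \<longrightarrow> dist (Z x') (Z q) < \<delta>"
    using CI[rule_format, OF pin(2) \<delta>] by blast
  define m where "m = min (min \<eta>x \<eta>p) (min \<eta>q (min (p + a) (a - q)))"
  have m_le: "m \<le> \<eta>x" "m \<le> \<eta>p" "m \<le> \<eta>q" "m \<le> p + a" "m \<le> a - q" by (simp_all add: m_def)
  have m_pos: "m > 0" using \<eta>x(1) \<eta>p(1) \<eta>q(1) pq by (simp add: m_def)
  define \<epsilon> where "\<epsilon> = m / 2"
  have e: "\<epsilon> > 0" using m_pos by (simp add: \<epsilon>_def)
  have ePQ: "-a + \<epsilon> < p" "q < a - \<epsilon>" using m_pos m_le unfolding \<epsilon>_def by linarith+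
  have eta: "\<epsilon> < \<eta>x" "\<epsilon> < \<eta>p" "\<epsilon> < \<eta>q" using m_pos m_le unfolding \<epsilon>_def by linarith+
  have contx: "\<forall>x\<in>{-a..a}. \<bar>x - x0\<bar> < \<epsilon> \<longrightarrow> \<bar>Z x - Z x0\<bar> \<le> \<delta>"
  proof (intro ballI impI)
    fix x assume x: "x \<in> {-a..a}" "\<bar>x - x0\<bar> < \<epsilon>"
    then have "dist x x0 < \<eta>x" using eta by (simp add: dist_real_def)
    then have "dist (Z x) (Z x0) < \<delta>" using \<eta>x(2) x(1) by blast
    then show "\<bar>Z x - Z x0\<bar> \<le> \<delta>" by (simp add: dist_real_def)
  qed
  have contp: "\<forall>x\<in>{-a..a}. \<bar>x - p\<bar> < \<epsilon> \<longrightarrow> \<bar>Z x - Z p\<bar> \<le> \<delta>"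
  proof (intro ballI impI)
    fix x assume x: "x \<in> {-a..a}" "\<bar>x - p\<bar> < \<epsilon>"
    then have "dist x p < \<eta>p" using eta by (simp add: dist_real_def)
    then have "dist (Z x) (Z p) < \<delta>" using \<eta>p(2) x(1) by blast
    then show "\<bar>Z x - Z p\<bar> \<le> \<delta>" by (simp add: dist_real_def)
  qed
  have contq: "\<forall>x\<in>{-a..a}. \<bar>x - q\<bar> < \<epsilon> \<longrightarrow> \<bar>Z x - Z q\<bar> \<le> \<delta>"
  proof (intro ballI impI)
    fix x assume x: "x \<in> {-a..a}" "\<bar>x - q\<bar> < \<epsilon>"
    then have "dist x q < \<eta>q" using eta by (simp add: dist_real_def)
    then have "dist (Z x) (Z q) < \<delta>" using \<eta>q(2) x(1) by blast
    then show "\<bar>Z x - Z q\<bar> \<le> \<delta>" by (simp add: dist_real_def)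
  qed
  define N where "N = (\<lambda>y. integral {-a..a} (\<lambda>x. 1 * (rho ((x - y) / \<epsilon>) * 1)))"
  define Zm where "Zm = (\<lambda>y. integral {-a..a} (\<lambda>x. Z x * (rho ((x - y) / \<epsilon>) * 1)))"
  define Z1 where "Z1 = (\<lambda>y. integral {-a..a} (\<lambda>x. Z x * (rho1 ((x - y) / \<epsilon>) * (- 1 / \<epsilon>))))"
  define Z2 where "Z2 = (\<lambda>y. integral {-a..a} (\<lambda>x. Z x * (rho2 ((x - y) / \<epsilon>) * (- (- 1 / \<epsilon>) / \<epsilon>))))"
  have Np: "N p > 0" unfolding N_def by (rule N_pos[OF e]) (use ePQ pq in auto)
  have Nx: "N x0 = N p"
    unfolding N_def
    apply (rule DERIV_isconst3[of "-a + \<epsilon>" "a - \<epsilon>", where f="\<lambda>y. integral {-a..a} (\<lambda>x. 1 * (rho ((x - y) / \<epsilon>) * 1))"])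
    using ePQ pq N_deriv0[OF e, of a] by auto
  have Nq: "N q = N p"
    unfolding N_def
    apply (rule DERIV_isconst3[of "-a + \<epsilon>" "a - \<epsilon>", where f="\<lambda>y. integral {-a..a} (\<lambda>x. 1 * (rho ((x - y) / \<epsilon>) * 1))"])
    using ePQ pq N_deriv0[OF e, of a] by auto
  have B1: "Zm x0 \<le> (Z x0 + \<delta>) * N x0"
    unfolding Zm_def N_def by (rule moll_bounds(1)[OF Zc e contx])
  have B2: "Zm p \<ge> (Z p - \<delta>) * N p"
    unfolding Zm_def N_def by (rule moll_bounds(2)[OF Zc e contp])
  have B3: "Zm q \<ge> (Z q - \<delta>) * N q"
    unfolding Zm_def N_def by (rule moll_bounds(2)[OF Zc e contq])
  have Zmd: "(Zm has_real_derivative Z1 t) (at t)" for t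
    unfolding Zm_def Z1_def
    by (rule leibniz_aff[OF Zc _ rho1_cont e]) (use smooth_DERIV[OF smooth_rho] in \<open>simp add: rho1_def\<close>)
  have Z1d: "(Z1 has_real_derivative Z2 t) (at t)" for t
    unfolding Z1_def Z2_def
    by (rule leibniz_aff[OF Zc _ rho2_cont e]) (use smooth_DERIV[OF smooth_rho1] in \<open>simp add: rho2_def\<close>)
  have gd: "((\<lambda>t. exp (c * t) * Z1 t) has_real_derivative exp (c * t) * (c * Z1 t + Z2 t)) (at t)" for t
    using Z1d[of t] by (auto intro!: derivative_eq_intros simp: algebra_simps)
  have gneg: "exp (c * t) * (c * Z1 t + Z2 t) \<le> 0" if t: "t \<in> {p..q}" for t
  proof -
    have tU: "-a < t - \<epsilon>" "t + \<epsilon> < a" using t ePQ by auto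
    have I1: "(\<lambda>x. Z x * (rho1 ((x - t) / \<epsilon>) * (- 1 / \<epsilon>))) integrable_on {-a..a}"
      by (rule integ_aff[OF Zc rho1_cont e])
    have I2: "(\<lambda>x. Z x * (rho2 ((x - t) / \<epsilon>) * (- (- 1 / \<epsilon>) / \<epsilon>))) integrable_on {-a..a}"
      by (rule integ_aff[OF Zc rho2_cont e])
    have "c * Z1 t + Z2 t = integral {-a..a} (\<lambda>x. c * (Z x * (rho1 ((x - t) / \<epsilon>) * (- 1 / \<epsilon>))) + Z x * (rho2 ((x - t) / \<epsilon>) * (- (- 1 / \<epsilon>) / \<epsilon>)))"
      unfolding Z1_def Z2_def
      using integral_add[OF integrable_on_mult_right[OF I1, of c] I2] by simp
    also have "\<dots> = integral {-a..a} (\<lambda>x. - (Z x * (c * deriv (phi t \<epsilon>) x - deriv (deriv (phi t \<epsilon>)) x)))"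
      unfolding deriv2_phi unfolding deriv_phi
      by (rule integral_cong) (simp add: algebra_simps power2_eq_square)
    also have "\<dots> = - integral {-a..a} (\<lambda>x. Z x * (c * deriv (phi t \<epsilon>) x - deriv (deriv (phi t \<epsilon>)) x))"
      by simp
    finally have "c * Z1 t + Z2 t \<le> 0"
      using SS[OF test_phi[OF e tU]] phi_nonneg by auto
    then show ?thesis by (simp add: mult_nonneg_nonpos)
  qed
  have cm: "Zm x0 \<ge> min (Zm p) (Zm q)"
    by (rule classical_min[OF pq(2) pq(3) _ gd gneg]) (rule Zmd)
  have "(Z x0 + \<delta>) * N x0 \<le> \<delta> * N x0"
    using Zx0 Np Nx by (intro mult_right_mono) auto
  moreover have "(d - \<delta>) * N p \<le> (Z p - \<delta>) * N p"
    using Zp Np by (intro mult_right_mono) auto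
  moreover have "(d - \<delta>) * N p \<le> (Z q - \<delta>) * N p"
    using Zq Np by (intro mult_right_mono) auto
  ultimately have "(d - \<delta>) * N p \<le> \<delta> * N p"
    using B1 B2 B3 cm Nx Nq by (simp add: min_def split: if_splits)
  then have "d - \<delta> \<le> \<delta>" using Np by simp
  then show False using d \<delta> by (simp add: \<delta>_def)
qed


lemma test_fun_props:
  assumes "test_fun a \<phi>"
  shows "\<And>x. (\<phi> has_real_derivative deriv \<phi> x) (at x)"
    and "\<And>x. (deriv \<phi> has_real_derivative deriv (deriv \<phi>) x) (at x)"
    and "continuous_on S \<phi>" and "continuous_on S (deriv \<phi>)" and "continuous_on S (deriv (deriv \<phi>))"
    and "\<phi> a = 0" and "\<phi> (-a) = 0" and "deriv \<phi> a = 0" and "deriv \<phi> (-a) = 0"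
proof -
  have D: "\<And>n x. ((deriv ^^ n) \<phi>) differentiable (at x)"
    and Sp: "\<exists>\<alpha> \<beta>. -a < \<alpha> \<and> \<beta> < a \<and> (\<forall>x. x \<notin> {\<alpha>..\<beta>} \<longrightarrow> \<phi> x = 0)"
    using assms unfolding test_fun_def by auto
  have D0: "\<And>x. \<phi> differentiable (at x)" using D[of 0] by simp
  have D1: "\<And>x. (deriv \<phi>) differentiable (at x)" using D[of 1] by simp
  have D2: "\<And>x. (deriv (deriv \<phi>)) differentiable (at x)" using D[of 2] by (simp add: numeral_2_eq_2)
  show "\<And>x. (\<phi> has_real_derivative deriv \<phi> x) (at x)" using D0 DERIV_deriv_iff_real_differentiable by blast
  show "\<And>x. (deriv \<phi> has_real_derivative deriv (deriv \<phi>) x) (at x)" using D1 DERIV_deriv_iff_real_differentiable by blast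
  show "continuous_on S \<phi>" using D0 by (meson continuous_at_imp_continuous_on differentiable_imp_continuous_within)
  show "continuous_on S (deriv \<phi>)" using D1 by (meson continuous_at_imp_continuous_on differentiable_imp_continuous_within)
  show "continuous_on S (deriv (deriv \<phi>))" using D2 by (meson continuous_at_imp_continuous_on differentiable_imp_continuous_within)
  obtain \<alpha> \<beta> where ab: "-a < \<alpha>" "\<beta> < a" "\<forall>x. x \<notin> {\<alpha>..\<beta>} \<longrightarrow> \<phi> x = 0" using Sp by blast
  have z1: "\<phi> x = 0" if "x > \<beta>" for x using ab that by auto
  have z2: "\<phi> x = 0" if "x < \<alpha>" for x using ab that by auto
  show "\<phi> a = 0" using z1 ab by simp
  show "\<phi> (-a) = 0" using z2 ab by simp
  have "((\<lambda>x. 0) has_real_derivative 0) (at a)" by simp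
  then have "(\<phi> has_real_derivative 0) (at a)"
    by (rule has_field_derivative_transform_within_open[where S="{\<beta><..}"]) (use ab z1 in auto)
  then show "deriv \<phi> a = 0" by (rule DERIV_imp_deriv)
  have "((\<lambda>x. 0) has_real_derivative 0) (at (-a))" by simp
  then have "(\<phi> has_real_derivative 0) (at (-a))"
    by (rule has_field_derivative_transform_within_open[where S="{..<\<alpha>}"]) (use ab z2 in auto)
  then show "deriv \<phi> (-a) = 0" by (rule DERIV_imp_deriv)
qed

lemma ibp_exp:
  assumes a: "0 < a" and tf: "test_fun a \<phi>" and s: "c * s - s^2 = lam"
  shows "integral {-a..a} (\<lambda>x. (v * exp (- s * (x + a))) * (c * deriv \<phi> x - deriv (deriv \<phi>) x))
       = integral {-a..a} (\<lambda>x. lam * (v * exp (- s * (x + a))) * \<phi> x)"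
proof -
  note P = test_fun_props[OF tf]
  define E where "E = (\<lambda>x. v * exp (- s * (x + a)))"
  have Ed: "(E has_real_derivative (- s) * E x) (at x)" for x
    unfolding E_def by (auto intro!: derivative_eq_intros simp: algebra_simps)
  define G where "G = (\<lambda>x. c * E x * \<phi> x - E x * deriv \<phi> x + ((- s) * E x) * \<phi> x)"
  have Gd: "(G has_real_derivative (E x * (c * deriv \<phi> x - deriv (deriv \<phi>) x) - lam * E x * \<phi> x)) (at x)" for x
  proof -
    have "(G has_real_derivative
       c * ((- s) * E x) * \<phi> x + c * E x * deriv \<phi> x - ((- s) * E x * deriv \<phi> x + E x * deriv (deriv \<phi>) x)
        + ((- s) * ((- s) * E x) * \<phi> x + (- s) * E x * deriv \<phi> x)) (at x)"
      unfolding G_def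
      by (auto intro!: derivative_eq_intros Ed P(1) P(2) simp: algebra_simps)
    moreover have "c * ((- s) * E x) * \<phi> x + c * E x * deriv \<phi> x - ((- s) * E x * deriv \<phi> x + E x * deriv (deriv \<phi>) x)
        + ((- s) * ((- s) * E x) * \<phi> x + (- s) * E x * deriv \<phi> x)
        = E x * (c * deriv \<phi> x - deriv (deriv \<phi>) x) - (c * s - s^2) * E x * \<phi> x"
      by (simp add: algebra_simps power2_eq_square)
    ultimately show ?thesis using s by simp
  qed
  have "((\<lambda>x. E x * (c * deriv \<phi> x - deriv (deriv \<phi>) x) - lam * E x * \<phi> x) has_integral (G a - G (-a))) {-a..a}"
  proof (rule fundamental_theorem_of_calculus)
    show "-a \<le> a" using a by simp
    fix x assume "x \<in> {-a..a}"
    show "(G has_vector_derivative E x * (c * deriv \<phi> x - deriv (deriv \<phi>) x) - lam * E x * \<phi> x) (at x within {-a..a})"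
      using has_field_derivative_at_within[OF Gd[of x]] has_real_derivative_iff_has_vector_derivative by blast
  qed
  moreover have "G a = 0" "G (-a) = 0" unfolding G_def using P(6-9) by auto
  ultimately have I: "integral {-a..a} (\<lambda>x. E x * (c * deriv \<phi> x - deriv (deriv \<phi>) x) - lam * E x * \<phi> x) = 0"
    using integral_unique by force
  have Ec: "continuous_on {-a..a} E" unfolding E_def by (intro continuous_intros)
  have i1: "(\<lambda>x. E x * (c * deriv \<phi> x - deriv (deriv \<phi>) x)) integrable_on {-a..a}"
    by (intro integrable_continuous_interval continuous_intros Ec P(3-5))
  have i2: "(\<lambda>x. lam * E x * \<phi> x) integrable_on {-a..a}"
    by (intro integrable_continuous_interval continuous_intros Ec P(3-5))
  show ?thesis using I integral_diff[OF i1 i2] unfolding E_def by simp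
qed


lemma supersol:
  fixes u F :: "real \<Rightarrow> real"
  assumes a: "0 < a" and s: "c * s - s^2 = lam" and uc: "continuous_on {-a..a} u"
      and ws: "weak_sol a c u F"
      and Fb: "\<forall>x\<in>{-a..a}. F x \<le> \<kappa> * lam * (v * exp (- s * (x + a)))"
      and pos: "\<kappa> * lam * v \<ge> 0"
      and tf: "test_fun a \<phi>" and pn: "\<forall>x. 0 \<le> \<phi> x"
  shows "0 \<le> integral {-a..a} (\<lambda>x. (\<kappa> * (v * exp (- s * (x + a))) - u x) * (c * deriv \<phi> x - deriv (deriv \<phi>) x))"
proof -
  note P = test_fun_props[OF tf]
  define E where "E = (\<lambda>x. v * exp (- s * (x + a)))"
  define L where "L = (\<lambda>x. c * deriv \<phi> x - deriv (deriv \<phi>) x)"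
  have Ec: "continuous_on {-a..a} E" unfolding E_def by (intro continuous_intros)
  have Lc: "continuous_on {-a..a} L" unfolding L_def by (intro continuous_intros P(4,5))
  have i1: "(\<lambda>x. \<kappa> * E x * L x) integrable_on {-a..a}"
    by (intro integrable_continuous_interval continuous_intros Ec Lc)
  have i2: "(\<lambda>x. u x * L x) integrable_on {-a..a}"
    by (intro integrable_continuous_interval continuous_intros uc Lc)
  have i3: "(\<lambda>x. \<kappa> * lam * E x * \<phi> x) integrable_on {-a..a}"
    by (intro integrable_continuous_interval continuous_intros Ec P(3))
  have "integral {-a..a} (\<lambda>x. (\<kappa> * E x - u x) * L x) = integral {-a..a} (\<lambda>x. \<kappa> * E x * L x) - integral {-a..a} (\<lambda>x. u x * L x)"
    using integral_diff[OF i1 i2] by (simp add: algebra_simps)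
  also have "integral {-a..a} (\<lambda>x. \<kappa> * E x * L x) = \<kappa> * integral {-a..a} (\<lambda>x. E x * L x)"
    by (simp add: mult.assoc)
  also have "integral {-a..a} (\<lambda>x. E x * L x) = integral {-a..a} (\<lambda>x. lam * E x * \<phi> x)"
    unfolding E_def L_def by (rule ibp_exp[OF a tf s])
  also have "\<kappa> * integral {-a..a} (\<lambda>x. lam * E x * \<phi> x) = integral {-a..a} (\<lambda>x. \<kappa> * lam * E x * \<phi> x)"
    by (simp add: mult.assoc)
  also have "integral {-a..a} (\<lambda>x. u x * L x) = integral {-a..a} (\<lambda>x. F x * \<phi> x)"
    using ws tf unfolding weak_sol_def L_def by blast
  finally have eq: "integral {-a..a} (\<lambda>x. (\<kappa> * E x - u x) * L x) = integral {-a..a} (\<lambda>x. \<kappa> * lam * E x * \<phi> x) - integral {-a..a} (\<lambda>x. F x * \<phi> x)" .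
  have ge: "integral {-a..a} (\<lambda>x. F x * \<phi> x) \<le> integral {-a..a} (\<lambda>x. \<kappa> * lam * E x * \<phi> x)"
  proof (cases "(\<lambda>x. F x * \<phi> x) integrable_on {-a..a}")
    case True
    show ?thesis
    proof (rule integral_le[OF True i3])
      fix x assume x: "x \<in> {-a..a}"
      have "F x \<le> \<kappa> * lam * E x" using Fb x unfolding E_def by auto
      then show "F x * \<phi> x \<le> \<kappa> * lam * E x * \<phi> x" using pn by (simp add: mult_right_mono)
    qed
  next
    case False
    then have "integral {-a..a} (\<lambda>x. F x * \<phi> x) = 0" by (rule not_integrable_integral)
    moreover have "0 \<le> integral {-a..a} (\<lambda>x. \<kappa> * lam * E x * \<phi> x)"
    proof (rule integral_nonneg[OF i3])
      fix x
      have "\<kappa> * lam * E x = (\<kappa> * lam * v) * exp (- s * (x + a))" unfolding E_def by simp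
      also have "\<dots> \<ge> 0" using pos by simp
      finally show "0 \<le> \<kappa> * lam * E x * \<phi> x" using pn by simp
    qed
    ultimately show ?thesis by simp
  qed
  show ?thesis using eq ge unfolding E_def L_def by simp
qed


lemma core_bound:
  fixes w m Fw Fm :: "real \<Rightarrow> real"
  assumes a: "0 < a"
      and v: "v1 > 0" "v2 > 0" and A: "A11 \<ge> 0" "A12 \<ge> 0" "A21 \<ge> 0" "A22 \<ge> 0"
      and eig: "A11 * v1 + A12 * v2 = lam * v1" "A21 * v1 + A22 * v2 = lam * v2"
      and s: "c * s - s^2 = lam"
      and wc: "continuous_on {-a..a} w" and mc: "continuous_on {-a..a} m"
      and ww: "weak_sol a c w Fw" and wm: "weak_sol a c m Fm"
      and Fwb: "\<forall>x\<in>{-a..a}. Fw x \<le> A11 * max (w x) 0 + A12 * max (m x) 0"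
      and Fmb: "\<forall>x\<in>{-a..a}. Fm x \<le> A21 * max (w x) 0 + A22 * max (m x) 0"
      and k0: "\<kappa>0 > 0" "w (-a) \<le> \<kappa>0 * v1" "m (-a) \<le> \<kappa>0 * v2" "w a \<le> 0" "m a \<le> 0"
  shows "\<forall>x\<in>{-a..a}. w x \<le> \<kappa>0 * (v1 * exp (- s * (x + a))) \<and> m x \<le> \<kappa>0 * (v2 * exp (- s * (x + a)))"
proof -
  have lam: "lam \<ge> 0"
  proof -
    have "lam * v1 \<ge> 0" using eig(1) A v by (metis add_nonneg_nonneg less_imp_le mult_nonneg_nonneg)
    then show ?thesis using v(1) by (simp add: zero_le_mult_iff)
  qed
  define S1 where "S1 = (\<lambda>x. v1 * exp (- s * (x + a)))"
  define S2 where "S2 = (\<lambda>x. v2 * exp (- s * (x + a)))"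
  have S1p: "S1 x > 0" for x using v by (simp add: S1_def)
  have S2p: "S2 x > 0" for x using v by (simp add: S2_def)
  define R where "R = (\<lambda>x. max (w x / S1 x) (m x / S2 x))"
  have Rc: "continuous_on {-a..a} R"
    unfolding R_def S1_def S2_def using v by (intro continuous_intros wc mc) auto
  obtain xm where xm: "xm \<in> {-a..a}" "\<forall>y\<in>{-a..a}. R y \<le> R xm"
    using continuous_attains_sup[OF compact_Icc _ Rc] a by auto
  define \<kappa> where "\<kappa> = R xm"
  have wle: "w x \<le> \<kappa> * S1 x" and mle: "m x \<le> \<kappa> * S2 x" if "x \<in> {-a..a}" for x
  proof -
    have "w x / S1 x \<le> \<kappa>" "m x / S2 x \<le> \<kappa>" using xm(2) that unfolding \<kappa>_def R_def by fastforce+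
    then show "w x \<le> \<kappa> * S1 x" "m x \<le> \<kappa> * S2 x" using S1p[of x] S2p[of x] by (simp_all add: divide_le_eq)
  qed
  show ?thesis
  proof (cases "\<kappa> \<le> \<kappa>0")
    case True
    show ?thesis
    proof
      fix x assume x: "x \<in> {-a..a}"
      have "w x \<le> \<kappa>0 * S1 x" using wle[OF x] True S1p[of x] by (meson mult_right_mono less_imp_le order_trans)
      moreover have "m x \<le> \<kappa>0 * S2 x" using mle[OF x] True S2p[of x] by (meson mult_right_mono less_imp_le order_trans)
      ultimately show "w x \<le> \<kappa>0 * (v1 * exp (- s * (x + a))) \<and> m x \<le> \<kappa>0 * (v2 * exp (- s * (x + a)))"
        by (simp add: S1_def S2_def)
    qed
  next
    case False
    then have kk: "\<kappa> > \<kappa>0" by simp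
    then have kpos: "\<kappa> > 0" using k0(1) by simp
    have mw: "max (w x) 0 \<le> \<kappa> * S1 x" "max (m x) 0 \<le> \<kappa> * S2 x" if "x \<in> {-a..a}" for x
      using wle[OF that] mle[OF that] kpos S1p[of x] S2p[of x] by auto
    have FwB: "\<forall>x\<in>{-a..a}. Fw x \<le> \<kappa> * lam * (v1 * exp (- s * (x + a)))"
    proof
      fix x assume x: "x \<in> {-a..a}"
      have "Fw x \<le> A11 * (\<kappa> * S1 x) + A12 * (\<kappa> * S2 x)"
        using Fwb x mw[OF x] A by (meson add_mono mult_left_mono order_trans)
      also have "\<dots> = \<kappa> * (A11 * v1 + A12 * v2) * exp (- s * (x + a))"
      proof -
        have "\<And>E. A11 * (\<kappa> * (v1 * E)) + A12 * (\<kappa> * (v2 * E)) = \<kappa> * (A11 * v1 + A12 * v2) * E"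
          by (simp add: algebra_simps)
        then show ?thesis unfolding S1_def S2_def by blast
      qed
      also have "\<dots> = \<kappa> * lam * (v1 * exp (- s * (x + a)))" using eig(1) by simp
      finally show "Fw x \<le> \<kappa> * lam * (v1 * exp (- s * (x + a)))" .
    qed
    have FmB: "\<forall>x\<in>{-a..a}. Fm x \<le> \<kappa> * lam * (v2 * exp (- s * (x + a)))"
    proof
      fix x assume x: "x \<in> {-a..a}"
      have "Fm x \<le> A21 * (\<kappa> * S1 x) + A22 * (\<kappa> * S2 x)"
        using Fmb x mw[OF x] A by (meson add_mono mult_left_mono order_trans)
      also have "\<dots> = \<kappa> * (A21 * v1 + A22 * v2) * exp (- s * (x + a))"
      proof -
        have "\<And>E. A21 * (\<kappa> * (v1 * E)) + A22 * (\<kappa> * (v2 * E)) = \<kappa> * (A21 * v1 + A22 * v2) * E"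
          by (simp add: algebra_simps)
        then show ?thesis unfolding S1_def S2_def by blast
      qed
      also have "\<dots> = \<kappa> * lam * (v2 * exp (- s * (x + a)))" using eig(2) by simp
      finally show "Fm x \<le> \<kappa> * lam * (v2 * exp (- s * (x + a)))" .
    qed
    have Z1: "\<kappa> * (v1 * exp (- s * (xm + a))) - w xm > 0"
    proof (rule weak_min[OF a, where Z="\<lambda>x. \<kappa> * (v1 * exp (- s * (x + a))) - w x" and c=c])
      show "continuous_on {-a..a} (\<lambda>x. \<kappa> * (v1 * exp (- s * (x + a))) - w x)"
        by (intro continuous_intros wc)
      fix \<phi> assume "test_fun a \<phi>" "\<forall>x. 0 \<le> \<phi> x"
      then show "0 \<le> integral {-a..a} (\<lambda>x. (\<kappa> * (v1 * exp (- s * (x + a))) - w x) * (c * deriv \<phi> x - deriv (deriv \<phi>) x))"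
        by (intro supersol[OF a s wc ww FwB]) (use kpos lam v in auto)
    next
      have "\<kappa> * v1 > \<kappa>0 * v1" using kk v by simp
      then show "\<kappa> * (v1 * exp (- s * (- a + a))) - w (- a) > 0" using k0 by simp
      have "\<kappa> * (v1 * exp (- s * (a + a))) > 0" using kpos v by simp
      then show "\<kappa> * (v1 * exp (- s * (a + a))) - w a > 0" using k0 by linarith
    qed (use xm in auto)
    have Z2: "\<kappa> * (v2 * exp (- s * (xm + a))) - m xm > 0"
    proof (rule weak_min[OF a, where Z="\<lambda>x. \<kappa> * (v2 * exp (- s * (x + a))) - m x" and c=c])
      show "continuous_on {-a..a} (\<lambda>x. \<kappa> * (v2 * exp (- s * (x + a))) - m x)"
        by (intro continuous_intros mc)
      fix \<phi> assume "test_fun a \<phi>" "\<forall>x. 0 \<le> \<phi> x"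
      then show "0 \<le> integral {-a..a} (\<lambda>x. (\<kappa> * (v2 * exp (- s * (x + a))) - m x) * (c * deriv \<phi> x - deriv (deriv \<phi>) x))"
        by (intro supersol[OF a s mc wm FmB]) (use kpos lam v in auto)
    next
      have "\<kappa> * v2 > \<kappa>0 * v2" using kk v by simp
      then show "\<kappa> * (v2 * exp (- s * (- a + a))) - m (- a) > 0" using k0 by simp
      have "\<kappa> * (v2 * exp (- s * (a + a))) > 0" using kpos v by simp
      then show "\<kappa> * (v2 * exp (- s * (a + a))) - m a > 0" using k0 by linarith
    qed (use xm in auto)
    have "w xm / S1 xm < \<kappa>" using Z1 S1p[of xm] by (simp add: S1_def divide_less_eq)
    moreover have "m xm / S2 xm < \<kappa>" using Z2 S2p[of xm] by (simp add: S2_def divide_less_eq)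
    ultimately have "R xm < \<kappa>" by (simp add: R_def)
    then show ?thesis by (simp add: \<kappa>_def)
  qed
qed


lemma Fw_bound:
  assumes "0 \<le> \<mu>" "\<mu> \<le> 1"
  shows "f_w \<mu> w m * ind (w \<ge> 0) * ind (m \<ge> 0) \<le> (1 - \<mu>) * max w 0 + \<mu> * max m 0"
proof (cases "w \<ge> 0 \<and> m \<ge> 0")
  case True
  have "w * (w + m) \<ge> 0" using True by simp
  then have "f_w \<mu> w m \<le> (1 - \<mu>) * w + \<mu> * m" by (simp add: f_w_def algebra_simps)
  then show ?thesis using True by (simp add: ind_def)
next
  case False
  then have "f_w \<mu> w m * ind (w \<ge> 0) * ind (m \<ge> 0) = 0" by (auto simp: ind_def)
  moreover have "(1 - \<mu>) * max w 0 + \<mu> * max m 0 \<ge> 0" using assms by simp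
  ultimately show ?thesis by linarith
qed

lemma Fm_bound:
  assumes "0 \<le> \<mu>" "\<mu> \<le> r" "0 < r" "0 < K"
  shows "f_m r K \<mu> w m * ind (w \<ge> 0) * ind (m \<ge> 0) \<le> \<mu> * max w 0 + (r - \<mu>) * max m 0"
proof (cases "w \<ge> 0 \<and> m \<ge> 0")
  case True
  have "r * m * ((w + m) / K) \<ge> 0" using True assms by simp
  then have "f_m r K \<mu> w m \<le> \<mu> * w + (r - \<mu>) * m" by (simp add: f_m_def algebra_simps)
  then show ?thesis using True by (simp add: ind_def)
next
  case False
  then have "f_m r K \<mu> w m * ind (w \<ge> 0) * ind (m \<ge> 0) = 0" by (auto simp: ind_def)
  moreover have "\<mu> * max w 0 + (r - \<mu>) * max m 0 \<ge> 0" using assms by simp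
  ultimately show ?thesis by linarith
qed

lemma eig_algebra:
  fixes r \<mu> sD :: real
  assumes "sD^2 = (r-1)^2 + 4*\<mu>^2"
  shows "\<mu> * \<mu> + (r - \<mu>) * ((1 + r - 2*\<mu> + sD)/2 - 1 + \<mu>) = ((1 + r - 2*\<mu> + sD)/2) * ((1 + r - 2*\<mu> + sD)/2 - 1 + \<mu>)"
proof -
  have "4 * (\<mu> * \<mu>) + 2 * (r - \<mu>) * (r - 1 + sD) = (1 + r - 2*\<mu> + sD) * (r - 1 + sD)"
    using assms by algebra
  moreover have "(1 + r - 2*\<mu> + sD)/2 - 1 + \<mu> = (r - 1 + sD) / 2" by (simp add: field_simps)
  ultimately show ?thesis by (simp add: field_simps)
qed


theorem mainTheorem6:
  fixes r K \<mu> :: real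
  assumes "assumption1 r K \<mu>"
  shows "\<exists>C>0. \<forall>a>0. \<forall>c\<ge>c_star r \<mu>. \<forall>w m. Pa r K \<mu> a c w m \<longrightarrow>
           (\<forall>x\<in>{-a..a}. max (w x) (m x)
              \<le> C * exp ((- c - sqrt (c^2 - (c_star r \<mu>)^2)) / 2 * (x + a)))"
proof -
  have r: "r > 1" and mu: "\<mu> > 0" "\<mu> < r / 2" "\<mu> < 1 - K" and K: "K > 0"
    using assms unfolding assumption1_def by auto
  have mu1: "\<mu> < 1" using mu K by linarith
  define D where "D = (r - 1)^2 + 4 * \<mu>^2"
  define sD where "sD = sqrt D"
  have D0: "D \<ge> 0" unfolding D_def by simp
  have sD0: "sD \<ge> 0" unfolding sD_def using D0 by simp
  have sD2: "sD^2 = (r - 1)^2 + 4 * \<mu>^2" unfolding sD_def using D0 by (simp add: D_def)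
  define lam where "lam = (1 + r - 2*\<mu> + sD) / 2"
  define v2 where "v2 = lam - 1 + \<mu>"
  have v2p: "v2 > 0" using r sD0 by (simp add: v2_def lam_def field_simps)
  have nn: "2 * (1 + r - 2*\<mu> + sqrt ((r-1)^2 + 4*\<mu>^2)) \<ge> 0"
  proof -
    have "sqrt ((r-1)^2 + 4*\<mu>^2) \<ge> 0" using sD0 by (simp add: sD_def D_def)
    moreover have "2 * \<mu> < r" using mu by simp
    ultimately have "1 + r - 2*\<mu> + sqrt ((r-1)^2 + 4*\<mu>^2) \<ge> 0" using r by linarith
    then show ?thesis by simp
  qed
  have cs2: "(c_star r \<mu>)^2 = 4 * lam"
    using nn unfolding c_star_def lam_def sD_def D_def by simp
  have cs0: "c_star r \<mu> \<ge> 0" unfolding c_star_def using nn by simp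
  have eig1: "(1 - \<mu>) * \<mu> + \<mu> * v2 = lam * \<mu>" by (simp add: v2_def algebra_simps)
  have eig2: "\<mu> * \<mu> + (r - \<mu>) * v2 = lam * v2"
    unfolding v2_def lam_def by (rule eig_algebra[OF sD2])
  obtain w0 m0 where wm0: "eq_star r K \<mu> = (w0, m0)" by (cases "eq_star r K \<mu>") auto
  define \<kappa>0 where "\<kappa>0 = 1 + \<bar>w0\<bar> / \<mu> + \<bar>m0\<bar> / v2"
  have k0: "\<kappa>0 > 0" using mu v2p by (simp add: \<kappa>0_def add_pos_nonneg)
  have kw: "w0 \<le> \<kappa>0 * \<mu>"
  proof -
    have "\<kappa>0 * \<mu> = \<mu> + \<bar>w0\<bar> + \<mu> * (\<bar>m0\<bar> / v2)" using mu by (simp add: \<kappa>0_def algebra_simps)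
    moreover have "\<mu> * (\<bar>m0\<bar> / v2) \<ge> 0" using mu v2p by simp
    ultimately show ?thesis using mu by linarith
  qed
  have km: "m0 \<le> \<kappa>0 * v2"
  proof -
    have "\<kappa>0 * v2 = v2 + v2 * (\<bar>w0\<bar> / \<mu>) + \<bar>m0\<bar>" using v2p by (simp add: \<kappa>0_def algebra_simps)
    moreover have "v2 * (\<bar>w0\<bar> / \<mu>) \<ge> 0" using mu v2p by simp
    ultimately show ?thesis using v2p by linarith
  qed
  define C where "C = \<kappa>0 * max \<mu> v2"
  have Cp: "C > 0" using k0 mu by (simp add: C_def)
  show ?thesis
  proof (intro exI[of _ C] conjI allI impI ballI)
    show "C > 0" by (rule Cp)
    fix a c w m x
    assume a: "0 < a" and c: "c_star r \<mu> \<le> c" and P: "Pa r K \<mu> a c w m" and x: "x \<in> {-a..a}"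
    define q where "q = sqrt (c^2 - (c_star r \<mu>)^2)"
    have cc: "c^2 \<ge> (c_star r \<mu>)^2" using c cs0 by (simp add: power_mono)
    have q2: "q^2 = c^2 - (c_star r \<mu>)^2" using cc by (simp add: q_def)
    define s where "s = (c + q) / 2"
    have s: "c * s - s^2 = lam"
    proof -
      have "c * s - s^2 = (c^2 - q^2) / 4" by (simp add: s_def power2_eq_square field_simps)
      then show ?thesis using q2 cs2 by simp
    qed
    have Pu: "continuous_on {-a..a} w" "continuous_on {-a..a} m"
      "weak_sol a c w (\<lambda>x. f_w \<mu> (w x) (m x) * ind (w x \<ge> 0) * ind (m x \<ge> 0))"
      "weak_sol a c m (\<lambda>x. f_m r K \<mu> (w x) (m x) * ind (w x \<ge> 0) * ind (m x \<ge> 0))"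
      "w (-a) = w0" "m (-a) = m0" "w a = 0" "m a = 0"
      using P wm0 unfolding Pa_def by auto
    have B: "\<forall>x\<in>{-a..a}. w x \<le> \<kappa>0 * (\<mu> * exp (- s * (x + a))) \<and> m x \<le> \<kappa>0 * (v2 * exp (- s * (x + a)))"
    proof (rule core_bound[OF a mu(1) v2p _ _ _ _ eig1 eig2 s Pu(1,2,3,4)])
      show "\<forall>x\<in>{-a..a}. f_w \<mu> (w x) (m x) * ind (w x \<ge> 0) * ind (m x \<ge> 0) \<le> (1 - \<mu>) * max (w x) 0 + \<mu> * max (m x) 0"
        using Fw_bound mu mu1 by auto
      show "\<forall>x\<in>{-a..a}. f_m r K \<mu> (w x) (m x) * ind (w x \<ge> 0) * ind (m x \<ge> 0) \<le> \<mu> * max (w x) 0 + (r - \<mu>) * max (m x) 0"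
        using Fm_bound[of \<mu> r K] mu r K by auto
    qed (use mu mu1 r k0 kw km Pu in auto)
    have ex: "(- c - sqrt (c^2 - (c_star r \<mu>)^2)) / 2 * (x + a) = - s * (x + a)"
      by (simp add: s_def q_def field_simps)
    have E: "exp (- s * (x + a)) > 0" by simp
    have "w x \<le> C * exp (- s * (x + a))"
    proof -
      have "w x \<le> \<kappa>0 * (\<mu> * exp (- s * (x + a)))" using B x by blast
      also have "\<dots> \<le> \<kappa>0 * (max \<mu> v2 * exp (- s * (x + a)))"
        using k0 E by (intro mult_left_mono mult_right_mono) auto
      finally show ?thesis by (simp add: C_def mult.assoc)
    qed
    moreover have "m x \<le> C * exp (- s * (x + a))"
    proof -
      have "m x \<le> \<kappa>0 * (v2 * exp (- s * (x + a)))" using B x by blast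
      also have "\<dots> \<le> \<kappa>0 * (max \<mu> v2 * exp (- s * (x + a)))"
        using k0 E by (intro mult_left_mono mult_right_mono) auto
      finally show ?thesis by (simp add: C_def mult.assoc)
    qed
    ultimately show "max (w x) (m x) \<le> C * exp ((- c - sqrt (c^2 - (c_star r \<mu>)^2)) / 2 * (x + a))"
      unfolding ex by simp
  qed
qed

end
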